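(* Let $p$ be a prime, $h\in\mathbb{Z}$, $q\in\mathbb{C}_p$ with $|1-q|_p<p^{-\frac{1}{p-1}}$, let $d$ be a positive integer and $\chi$ a Dirichlet character with conductor $d$. Then for every integer $k\geq 0$, $$B_{k,q,\chi}^{(h)} = d^{k-1}\sum_{i=0}^{d-1}\chi(i)\, q^{hi}\, B_{k,q^d}^{(h)}\!\left(\frac{i}{d}\right).$$
   Context: $\mathbb{C}_p$ is the completion of an algebraic closure of $\mathbb{Q}_p$ with $|p|_p=p^{-1}$; for $x\in\mathbb{Z}_p$, $q^x:=\exp(x\log q)$. The generalized $(h,q)$-Bernoulli numbers attached to $\chi$ are $$B_{n,q,\chi}^{(h)} := \lim_{l\to\infty}\frac{1}{dp^l}\sum_{x=0}^{dp^l-1}\chi(x)\,q^{hx}\,x^n \qquad (n\ge 0),$$ (the Volkenborn integral $\int_X \chi(x)q^{hx}x^n\,d\mu_1(x)$ over $X=\varprojlim_N \mathbb{Z}/dp^N\mathbb{Z}$). The $(h,q)$-Bernoulli polynomials $B_{n,q}^{(h)}(x)$ are defined by the power series expansion in $t$ $$\frac{h\log q + t}{q^h e^t - 1}\, e^{xt} = \sum_{n=0}^\infty B_{n,q}^{(h)}(x)\frac{t^n}{n!},$$ and $B_{n,q^d}^{(h)}(x)$ is the same with $q$ replaced by $q^d$. *)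

theory Defs
  imports "HOL-Computational_Algebra.Computational_Algebra" "HOL-Number_Theory.Number_Theory"
begin

definition conv_abs :: "('a::field \<Rightarrow> real) \<Rightarrow> (nat \<Rightarrow> 'a) \<Rightarrow> 'a \<Rightarrow> bool" where
  "conv_abs absp f L \<longleftrightarrow> (\<forall>\<epsilon>>0. \<exists>N. \<forall>n\<ge>N. absp (f n - L) < \<epsilon>)"

(* The field 'a with absolute value absp is (isometrically) C_p:
   a non-archimedean absolute value with |p| = 1/p, complete, algebraically closed,
   and the algebraic numbers are dense (so 'a is the completion of an algebraic
   closure of Q_p). *)
definition is_Cp :: "nat \<Rightarrow> ('a::field_char_0 \<Rightarrow> real) \<Rightarrow> bool" where
  "is_Cp p absp \<longleftrightarrow>
     (\<forall>x. absp x \<ge> 0) \<and> (\<forall>x. absp x = 0 \<longleftrightarrow> x = 0) \<and>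
     (\<forall>x y. absp (x * y) = absp x * absp y) \<and>
     (\<forall>x y. absp (x + y) \<le> max (absp x) (absp y)) \<and>
     absp (of_nat p) = 1 / real p \<and>
     (\<forall>f. (\<forall>\<epsilon>>0. \<exists>N. \<forall>m\<ge>N. \<forall>n\<ge>N. absp (f m - f n) < \<epsilon>) \<longrightarrow> (\<exists>L. conv_abs absp f L)) \<and>
     (\<forall>P::'a poly. degree P > 0 \<longrightarrow> (\<exists>x. poly P x = 0)) \<and>
     (\<forall>x. \<forall>\<epsilon>>0. \<exists>y. algebraic y \<and> absp (x - y) < \<epsilon>)"

definition logp :: "('a::field_char_0 \<Rightarrow> real) \<Rightarrow> 'a \<Rightarrow> 'a" where
  "logp absp q = (THE L. conv_abs absp
      (\<lambda>N. \<Sum>n<N. (-1) ^ n * (q - 1) ^ (n + 1) / of_nat (n + 1)) L)"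

definition hq_bernpoly :: "('a::field_char_0 \<Rightarrow> real) \<Rightarrow> int \<Rightarrow> 'a \<Rightarrow> nat \<Rightarrow> 'a \<Rightarrow> 'a" where
  "hq_bernpoly absp h q n x =
     fact n * fps_nth
       ((fps_const (of_int h * logp absp q) + fps_X) /
          (fps_const (q powi h) * fps_exp 1 - 1) * fps_exp x) n"

definition dirichlet_char :: "nat \<Rightarrow> (nat \<Rightarrow> 'a::field) \<Rightarrow> bool" where
  "dirichlet_char d \<chi> \<longleftrightarrow> d > 0 \<and> \<chi> 1 = 1 \<and>
     (\<forall>a b. \<chi> (a * b) = \<chi> a * \<chi> b) \<and> (\<forall>a. \<chi> (a + d) = \<chi> a) \<and>
     (\<forall>a. \<chi> a \<noteq> 0 \<longleftrightarrow> coprime a d)"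

definition has_conductor :: "(nat \<Rightarrow> 'a::field) \<Rightarrow> nat \<Rightarrow> bool" where
  "has_conductor \<chi> d \<longleftrightarrow> dirichlet_char d \<chi> \<and>
     (\<forall>f. f dvd d \<and> (\<forall>a b. coprime a d \<and> coprime b d \<and> [a = b] (mod f) \<longrightarrow> \<chi> a = \<chi> b)
        \<longrightarrow> f = d)"

(* the Riemann-type sums whose limit (l \<rightarrow> \<infinity>) defines B^{(h)}_{n,q,\<chi>} *)
definition volk_sum :: "nat \<Rightarrow> nat \<Rightarrow> (nat \<Rightarrow> 'a::field_char_0) \<Rightarrow> int \<Rightarrow> 'a \<Rightarrow> nat \<Rightarrow> nat \<Rightarrow> 'a" where
  "volk_sum p d \<chi> h q n l =
     (1 / of_nat (d * p ^ l)) * (\<Sum>x<d * p ^ l. \<chi> x * q powi (h * int x) * of_nat x ^ n)"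

end

theory Submission
  imports Defs
begin



lemma real_k2_lim:
  fixes \<rho> :: real assumes "0 \<le> \<rho>" "\<rho> < 1"
  shows "(\<lambda>k. real k ^ 2 * \<rho> ^ k) \<longlonglongrightarrow> 0"
proof -
  have s: "norm (sqrt \<rho>) < 1" using assms by simp
  have "(\<lambda>k. (of_nat k * sqrt \<rho> ^ k) * (of_nat k * sqrt \<rho> ^ k)) \<longlonglongrightarrow> 0"
    using tendsto_mult_zero[OF powser_times_n_limit_0[OF s] powser_times_n_limit_0[OF s]] .
  moreover have "(of_nat k * sqrt \<rho> ^ k) * (of_nat k * sqrt \<rho> ^ k) = real k ^ 2 * \<rho> ^ k" for k
    using assms by (simp add: power2_eq_square power_mult_distrib[symmetric] algebra_simps)
  ultimately show ?thesis by simp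
qed

lemma binom_rec:
  "(of_nat (M choose Suc k) :: 'a::field_char_0) * of_nat (Suc k) = of_nat (M choose k) * (of_nat M - of_nat k)"
proof (cases "k \<le> M")
  case True
  have "Suc k * (M choose Suc k) = (M - k) * (M choose k)"
  proof (cases M)
    case 0 then show ?thesis by simp
  next
    case (Suc m)
    then show ?thesis using Suc_times_binomial[of k m] binomial_absorb_comp[of M k] by simp
  qed
  then have "(of_nat (Suc k * (M choose Suc k)) :: 'a) = of_nat ((M - k) * (M choose k))" by simp
  then show ?thesis using True by (simp add: of_nat_diff algebra_simps)
next
  case False then show ?thesis by (simp add: binomial_eq_0)
qed

lemma binom_prod:
  assumes "M > 0"
  shows "(of_nat (M choose Suc n) :: 'a::field_char_0) / of_nat M =
    (-1) ^ n / of_nat (Suc n) * (\<Prod>i\<in>{1..n}. (1 - of_nat M / of_nat i))"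
proof (induction n)
  case 0 then show ?case using assms by simp
next
  case (Suc n)
  have "(of_nat (M choose Suc (Suc n)) :: 'a) = of_nat (M choose Suc n) * (of_nat M - of_nat (Suc n)) / of_nat (Suc (Suc n))"
  proof -
    have e: "(of_nat (M choose Suc (Suc n)) :: 'a) * of_nat (Suc (Suc n)) = of_nat (M choose Suc n) * (of_nat M - of_nat (Suc n))"
      by (rule binom_rec)
    show ?thesis by (simp add: eq_divide_eq e del: of_nat_Suc)
  qed
  then have "(of_nat (M choose Suc (Suc n)) :: 'a) / of_nat M = (of_nat (M choose Suc n) / of_nat M) * ((of_nat M - of_nat (Suc n)) / of_nat (Suc (Suc n)))"
    by (simp add: field_simps)
  also have "\<dots> = (-1) ^ n / of_nat (Suc n) * (\<Prod>i\<in>{1..n}. (1 - of_nat M / of_nat i)) * ((of_nat M - of_nat (Suc n)) / of_nat (Suc (Suc n)))"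
    using Suc by simp
  also have "\<dots> = (-1) ^ Suc n / of_nat (Suc (Suc n)) * ((\<Prod>i\<in>{1..n}. (1 - of_nat M / of_nat i)) * (1 - of_nat M / of_nat (Suc n)))"
    by (simp add: field_simps del: of_nat_Suc)
  also have "\<dots> = (-1) ^ Suc n / of_nat (Suc (Suc n)) * (\<Prod>i\<in>{1..Suc n}. (1 - of_nat M / of_nat i))"
    by (simp add: prod.cl_ivl_Suc)
  finally show ?case .
qed

lemma sum_split_blocks:
  fixes f :: "nat \<Rightarrow> 'b::comm_monoid_add"
  shows "(\<Sum>x<d * M. f x) = (\<Sum>i<d. \<Sum>y<M. f (i + d * y))"
proof (induction M)
  case 0 then show ?case by simp
next
  case (Suc M)
  have "{..<d * Suc M} = {..<d * M} \<union> {d * M..<d * M + d}" by (auto simp: algebra_simps)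
  then have "(\<Sum>x<d * Suc M. f x) = (\<Sum>x<d * M. f x) + (\<Sum>x\<in>{d * M..<d * M + d}. f x)"
    by (simp add: sum.union_disjoint ivl_disj_int)
  also have "(\<Sum>x\<in>{d * M..<d * M + d}. f x) = (\<Sum>i<d. f (i + d * M))"
    using sum.shift_bounds_nat_ivl[of f 0 "d * M" d] by (simp add: atLeast0LessThan add.commute)
  finally show ?case using Suc by (simp add: sum.distrib)
qed

lemma fps_tele:
  fixes Q :: "'a::field_char_0"
  shows "(fps_const Q * fps_exp 1 - 1) * (\<Sum>y<M. fps_const (Q ^ y) * fps_exp (of_nat y))
    = fps_const (Q ^ M) * fps_exp (of_nat M) - 1"
proof -
  define g where "g y = fps_const (Q ^ y) * fps_exp (of_nat y :: 'a)" for y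
  have "(fps_const Q * fps_exp 1 - 1) * g y = g (Suc y) - g y" for y
  proof -
    have "fps_exp (of_nat (Suc y) :: 'a) = fps_exp 1 * fps_exp (of_nat y)"
      using fps_exp_add_mult[of 1 "of_nat y :: 'a"] by (simp add: add.commute)
    moreover have "fps_const Q * fps_const (Q ^ y) = fps_const (Q ^ Suc y)" by simp
    moreover have "(fps_const Q * fps_exp 1 - 1) * g y = (fps_const Q * fps_const (Q ^ y)) * (fps_exp 1 * fps_exp (of_nat y)) - g y"
      unfolding g_def by (simp add: algebra_simps del: fps_const_mult)
    ultimately show ?thesis unfolding g_def by simp
  qed
  then have "(fps_const Q * fps_exp 1 - 1) * (\<Sum>y<M. g y) = (\<Sum>y<M. g (Suc y) - g y)"
    by (simp add: sum_distrib_left)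
  also have "\<dots> = g M - g 0" by (rule sum_lessThan_telescope)
  finally show ?thesis unfolding g_def by simp
qed

locale padic =
  fixes absp :: "'a::field_char_0 \<Rightarrow> real" and p :: nat
  assumes nonneg: "\<And>x. absp x \<ge> 0"
    and zero_iff: "\<And>x. absp x = 0 \<longleftrightarrow> x = 0"
    and mult: "\<And>x y. absp (x * y) = absp x * absp y"
    and ultra: "\<And>x y. absp (x + y) \<le> max (absp x) (absp y)"
    and abs_p: "absp (of_nat p) = 1 / real p"
    and prime: "prime p"
    and complete: "\<forall>f. (\<forall>\<epsilon>>0. \<exists>N. \<forall>m\<ge>N. \<forall>n\<ge>N. absp (f m - f n) < \<epsilon>) \<longrightarrow> (\<exists>L. conv_abs absp f L)"
begin

lemma abs_1: "absp 1 = 1"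
proof -
  have "absp 1 = absp 1 * absp 1" using mult[of 1 1] by simp
  moreover have "absp 1 \<noteq> 0" using zero_iff by simp
  ultimately show ?thesis by simp
qed

lemma abs_0: "absp 0 = 0" using zero_iff by simp

lemma abs_minus1: "absp (-1) = 1"
proof -
  have e: "absp (-1) * absp (-1) = 1" using mult[of "-1" "-1"] abs_1 by simp
  have g: "absp (-1) \<ge> 0" by (rule nonneg)
  show ?thesis
  proof (cases "absp (-1) < 1")
    case True then have "absp (-1) * absp (-1) \<le> absp (-1) * 1" using g by (intro mult_left_mono) auto
    then show ?thesis using True e by simp
  next
    case False then have "absp (-1) * absp (-1) \<ge> 1 * absp (-1)" using g by (intro mult_right_mono) auto
    then show ?thesis using False e by simp
  qed
qed

lemma abs_minus: "absp (- x) = absp x"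
  using mult[of "-1" x] abs_minus1 by simp

lemma abs_diff_commute: "absp (x - y) = absp (y - x)"
  using abs_minus[of "x - y"] by simp

lemma triangle: "absp (x + y) \<le> absp x + absp y"
  using ultra[of x y] nonneg[of x] nonneg[of y] by linarith

lemma ultra_diff: "absp (x - y) \<le> max (absp x) (absp y)"
  using ultra[of x "-y"] abs_minus[of y] by simp

lemma abs_power: "absp (x ^ n) = absp x ^ n"
  by (induction n) (auto simp: abs_1 mult)

lemma abs_inverse: "absp (inverse x) = inverse (absp x)"
proof (cases "x = 0")
  case True then show ?thesis by (simp add: abs_0)
next
  case False
  have "absp (inverse x) * absp x = 1" using mult[of "inverse x" x] False abs_1 by simp
  moreover have "absp x \<noteq> 0" using False zero_iff by simp
  ultimately show ?thesis by (metis divide_inverse_commute divide_self_if mult_1 nonzero_eq_divide_eq)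
qed

lemma abs_divide: "absp (x / y) = absp x / absp y"
  by (simp add: divide_inverse mult abs_inverse)

lemma abs_of_nat_le1: "absp (of_nat n) \<le> 1"
proof (induction n)
  case 0 then show ?case by (simp add: abs_0)
next
  case (Suc n)
  have "absp (of_nat n + 1) \<le> max (absp (of_nat n)) (absp 1)" by (rule ultra)
  then show ?case using Suc abs_1 by (simp add: add.commute)
qed

lemma abs_of_int_le1: "absp (of_int n) \<le> 1"
proof (cases "n \<ge> 0")
  case True
  then show ?thesis using abs_of_nat_le1[of "nat n"] by (metis of_int_of_nat_eq int_nat_eq)
next
  case False
  then have "of_int n = - (of_nat (nat (-n)) :: 'a)" by simp
  then show ?thesis using abs_of_nat_le1[of "nat (-n)"] abs_minus by metis
qed

lemma p_gt1: "p > 1" using prime prime_gt_1_nat by blast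

lemma abs_coprime: assumes "\<not> p dvd n" shows "absp (of_nat n) = 1"
proof -
  have "coprime (int p) (int n)" using assms prime
    by (metis coprime_commute int_dvd_int_iff prime_imp_coprime prime_nat_iff_prime coprime_int_iff prime_imp_coprime_nat)
  then obtain u v :: int where uv: "u * int p + v * int n = 1"
    by (metis bezout_int gcd.commute coprime_iff_gcd_eq_1)
  have "(1::'a) = of_int u * of_nat p + of_int v * of_nat n"
    using arg_cong[OF uv, of "of_int :: int \<Rightarrow> 'a"] by simp
  then have "1 \<le> max (absp (of_int u * of_nat p)) (absp (of_int v * of_nat n))"
    using ultra abs_1 by metis
  moreover have "absp (of_int u * of_nat p) \<le> 1 / real p"
    using abs_of_int_le1[of u] abs_p mult nonneg
    by (metis mult_left_le_one_le mult.commute of_nat_0_le_iff zero_le_divide_1_iff)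
  moreover have "1 / real p < 1" using p_gt1 by simp
  moreover have "absp (of_int v * of_nat n) \<le> absp (of_nat n)"
    using abs_of_int_le1[of v] mult nonneg by (simp add: mult_left_le_one_le)
  ultimately show ?thesis using abs_of_nat_le1[of n] by linarith
qed

lemma abs_of_nat_ge: "n > 0 \<Longrightarrow> absp (of_nat n) \<ge> 1 / real n"
proof (induction n rule: less_induct)
  case (less n)
  show ?case
  proof (cases "p dvd n")
    case False then show ?thesis using abs_coprime less.prems by simp
  next
    case True
    then obtain m where m: "n = p * m" by auto
    have "m > 0" "m < n" using m less.prems p_gt1 by auto
    then have "absp (of_nat m) \<ge> 1 / real m" using less.IH by auto
    then have "(1 / real m) / real p \<le> absp (of_nat m) / real p"
      using p_gt1 divide_right_mono by (metis of_nat_0_le_iff)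
    then show ?thesis using m mult[of "of_nat p" "of_nat m"] abs_p by (simp add: mult.commute)
  qed
qed

lemma abs_inv_nat: "n > 0 \<Longrightarrow> absp (1 / of_nat n) \<le> real n"
  using abs_of_nat_ge[of n] abs_divide abs_1
proof -
  assume n: "n > 0"
  have "absp (1 / of_nat n) = 1 / absp (of_nat n)" using abs_divide abs_1 by simp
  moreover have "absp (of_nat n) > 0" using abs_of_nat_ge[OF n] n
    by (smt (verit) of_nat_0_less_iff zero_less_divide_1_iff)
  ultimately show ?thesis using abs_of_nat_ge[OF n] n
    by (simp add: divide_simps) (smt (verit) mult.commute divide_le_eq nonzero_mult_div_cancel_left of_nat_0_less_iff)
qed

lemma abs_ppow: "absp (of_nat (p ^ l)) = 1 / real (p ^ l)"
  by (simp add: abs_power abs_p power_one_over)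

lemma conv_iff: "conv_abs absp f L \<longleftrightarrow> (\<lambda>n. absp (f n - L)) \<longlonglongrightarrow> 0"
  unfolding conv_abs_def LIMSEQ_iff using nonneg by simp

lemma conv_bound:
  assumes "eventually (\<lambda>n. absp (f n - L) \<le> g n) sequentially" "g \<longlonglongrightarrow> 0"
  shows "conv_abs absp f L"
  unfolding conv_iff
  by (rule tendsto_sandwich[of "\<lambda>_. 0" _ _ g]) (use assms nonneg in auto)

lemma conv_const: "conv_abs absp (\<lambda>n. c) c"
  unfolding conv_iff by (simp add: abs_0)

lemma conv_add:
  assumes "conv_abs absp f a" "conv_abs absp g b"
  shows "conv_abs absp (\<lambda>n. f n + g n) (a + b)"
proof (rule conv_bound)
  show "eventually (\<lambda>n. absp (f n + g n - (a + b)) \<le> absp (f n - a) + absp (g n - b)) sequentially"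
    using triangle by (auto simp: algebra_simps intro!: always_eventually)
      (metis add_diff_add triangle)
  show "(\<lambda>n. absp (f n - a) + absp (g n - b)) \<longlonglongrightarrow> 0"
    using assms unfolding conv_iff by (intro tendsto_add_zero)
qed

lemma conv_mult:
  assumes "conv_abs absp f a" "conv_abs absp g b"
  shows "conv_abs absp (\<lambda>n. f n * g n) (a * b)"
proof (rule conv_bound)
  show "eventually (\<lambda>n. absp (f n * g n - a * b) \<le>
      absp (f n - a) * absp (g n - b) + (absp a * absp (g n - b) + absp b * absp (f n - a))) sequentially"
  proof (intro always_eventually allI)
    fix n
    have "f n * g n - a * b = (f n - a) * (g n - b) + (a * (g n - b) + b * (f n - a))"
      by (simp add: algebra_simps)
    then have "absp (f n * g n - a * b) \<le> absp ((f n - a) * (g n - b)) + absp (a * (g n - b) + b * (f n - a))"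
      using triangle by metis
    also have "\<dots> \<le> absp ((f n - a) * (g n - b)) + (absp (a * (g n - b)) + absp (b * (f n - a)))"
      using triangle by simp
    finally show "absp (f n * g n - a * b) \<le>
      absp (f n - a) * absp (g n - b) + (absp a * absp (g n - b) + absp b * absp (f n - a))"
      by (simp add: mult)
  qed
  show "(\<lambda>n. absp (f n - a) * absp (g n - b) + (absp a * absp (g n - b) + absp b * absp (f n - a))) \<longlonglongrightarrow> 0"
    using assms unfolding conv_iff
    by (intro tendsto_add_zero tendsto_mult_zero tendsto_mult_right_zero)
qed

lemma conv_cmult: "conv_abs absp f a \<Longrightarrow> conv_abs absp (\<lambda>n. c * f n) (c * a)"
  using conv_mult[OF conv_const] .

lemma conv_neg: "conv_abs absp f a \<Longrightarrow> conv_abs absp (\<lambda>n. - f n) (- a)"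
  using conv_cmult[of f a "-1"] by simp

lemma conv_diff: "conv_abs absp f a \<Longrightarrow> conv_abs absp g b \<Longrightarrow> conv_abs absp (\<lambda>n. f n - g n) (a - b)"
  using conv_add[OF _ conv_neg, of f a g b] by simp

lemma conv_sum:
  assumes "finite A" "\<And>i. i \<in> A \<Longrightarrow> conv_abs absp (f i) (L i)"
  shows "conv_abs absp (\<lambda>n. \<Sum>i\<in>A. f i n) (\<Sum>i\<in>A. L i)"
  using assms
proof (induction A rule: finite_induct)
  case empty then show ?case using conv_const[of 0] by simp
next
  case (insert x F)
  then show ?case by (simp add: conv_add)
qed

lemma conv_unique:
  assumes "conv_abs absp f a" "conv_abs absp f b" shows "a = b"
proof (rule ccontr)
  assume "a \<noteq> b"
  then have e: "absp (a - b) / 2 > 0" using zero_iff nonneg by (metis diff_eq_eq add_0 half_gt_zero_iff order_le_less)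
  obtain N1 where N1: "\<forall>n\<ge>N1. absp (f n - a) < absp (a - b) / 2" using assms(1) e unfolding conv_abs_def by blast
  obtain N2 where N2: "\<forall>n\<ge>N2. absp (f n - b) < absp (a - b) / 2" using assms(2) e unfolding conv_abs_def by blast
  have "a - b = (f (max N1 N2) - b) - (f (max N1 N2) - a)" by simp
  then have "absp (a - b) \<le> absp (f (max N1 N2) - b) + absp (f (max N1 N2) - a)"
    using triangle[of "f (max N1 N2) - b" "- (f (max N1 N2) - a)"] abs_minus[of "f (max N1 N2) - a"] by simp
  moreover have "absp (f (max N1 N2) - a) < absp (a - b) / 2" using N1 by simp
  moreover have "absp (f (max N1 N2) - b) < absp (a - b) / 2" using N2 by simp
  ultimately show False by linarith
qed

lemma conv_reindex:
  assumes "conv_abs absp f a" "\<And>l. g l \<ge> l" shows "conv_abs absp (\<lambda>l. f (g l)) a"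
  unfolding conv_abs_def
proof (intro allI impI)
  fix e :: real assume "e > 0"
  then obtain N where "\<forall>n\<ge>N. absp (f n - a) < e" using assms(1) unfolding conv_abs_def by blast
  then show "\<exists>N. \<forall>n\<ge>N. absp (f (g n) - a) < e" using assms(2) by (meson order_trans)
qed

lemma abs_sum_le:
  assumes "finite A" "\<And>i. i \<in> A \<Longrightarrow> absp (f i) \<le> B" "B \<ge> 0"
  shows "absp (\<Sum>i\<in>A. f i) \<le> B"
  using assms
proof (induction A rule: finite_induct)
  case empty then show ?case by (simp add: abs_0)
next
  case (insert x F)
  then have "absp (f x + sum f F) \<le> max (absp (f x)) (absp (sum f F))" using ultra by blast
  then show ?case using insert(1,2) insert(3)[OF insert(4,5)] insert(4)[of x] by simp
qed

lemma abs_prod_le: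
  assumes "finite A" "\<And>i. i \<in> A \<Longrightarrow> absp (x i) \<le> B" "B \<ge> 0" "B \<le> 1"
  shows "absp ((\<Prod>i\<in>A. (1 - x i)) - 1) \<le> B"
  using assms
proof (induction A rule: finite_induct)
  case empty then show ?case by (simp add: abs_0)
next
  case (insert y F)
  let ?P = "\<Prod>i\<in>F. (1 - x i)"
  have "(\<Prod>i\<in>insert y F. (1 - x i)) - 1 = (?P - 1) * (1 - x y) + (- x y)"
    using insert by (simp add: algebra_simps)
  moreover have "absp (1 - x y) \<le> 1" using ultra_diff[of 1 "x y"] insert(4)[of y] insert(5,6) abs_1 by simp
  moreover have "absp (?P - 1) \<le> B" using insert by simp
  ultimately have "absp ((\<Prod>i\<in>insert y F. (1 - x i)) - 1) \<le> max (absp (?P - 1) * absp (1 - x y)) (absp (x y))"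
    using ultra[of "(?P - 1) * (1 - x y)" "- x y"] by (simp add: mult abs_minus)
  moreover have "absp (?P - 1) * absp (1 - x y) \<le> B"
    using \<open>absp (1 - x y) \<le> 1\<close> \<open>absp (?P - 1) \<le> B\<close> nonneg
    by (meson mult_le_one order_trans mult_left_le)
  ultimately show ?case using insert(1,2) insert(4)[of y] by simp
qed

lemma abs_neg1_pow: "absp ((-1) ^ n) = 1"
  by (simp add: abs_power abs_minus1)

lemma log_term_bound:
  "absp ((-1) ^ n * u ^ Suc n / of_nat (Suc n)) \<le> real (Suc n) ^ 2 * absp u ^ Suc n"
proof -
  have "absp ((-1) ^ n * u ^ Suc n / of_nat (Suc n)) = absp u ^ Suc n * absp (1 / of_nat (Suc n))"
    by (simp add: abs_divide mult abs_neg1_pow abs_power abs_1 abs_minus1)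
  also have "\<dots> \<le> absp u ^ Suc n * real (Suc n)"
    using abs_inv_nat[of "Suc n"] nonneg by (intro mult_left_mono) auto
  also have "\<dots> \<le> absp u ^ Suc n * real (Suc n) ^ 2"
    using nonneg by (intro mult_left_mono) (auto simp: power2_eq_square)
  finally show ?thesis by (simp add: mult.commute)
qed

lemma log_conv:
  assumes "absp (r - 1) < 1"
  shows "conv_abs absp (\<lambda>N. \<Sum>n<N. (-1) ^ n * (r - 1) ^ (n + 1) / of_nat (n + 1)) (logp absp r)"
proof -
  define u where "u = r - 1"
  define S where "S N = (\<Sum>n<N. (-1) ^ n * u ^ (n + 1) / of_nat (n + 1))" for N
  define t where "t k = real k ^ 2 * absp u ^ k" for k
  have t0: "t \<longlonglongrightarrow> 0" unfolding t_def using real_k2_lim[of "absp u"] assms nonneg u_def by simp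
  have cauchy: "\<exists>N. \<forall>m\<ge>N. \<forall>n\<ge>N. absp (S m - S n) < e" if e: "e > 0" for e
  proof -
    obtain N where N: "\<forall>k\<ge>N. t k < e / 2"
      using t0 e unfolding LIMSEQ_iff by (metis half_gt_zero_iff less_eq_real_def abs_less_iff real_norm_def diff_zero nonneg)
    have *: "absp (S m - S n) \<le> e / 2" if "n \<le> m" "n \<ge> N" for m n
    proof -
      have "S m - S n = (\<Sum>k\<in>{n..<m}. (-1) ^ k * u ^ Suc k / of_nat (Suc k))"
        unfolding S_def using sum_diff_nat_ivl[of 0 n m] that by (simp add: lessThan_atLeast0)
      also have "absp \<dots> \<le> e / 2"
      proof (rule abs_sum_le)
        fix k assume "k \<in> {n..<m}"
        then have "Suc k \<ge> N" using that by auto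
        then show "absp ((-1) ^ k * u ^ Suc k / of_nat (Suc k)) \<le> e / 2"
          using log_term_bound[of k u] N unfolding t_def by (meson less_eq_real_def order_trans)
      qed (use e in auto)
      finally show ?thesis .
    qed
    show ?thesis
    proof (intro exI allI impI)
      fix m n assume "m \<ge> N" "n \<ge> N"
      then show "absp (S m - S n) < e"
        using *[of n m] *[of m n] e abs_diff_commute[of "S m" "S n"] by (cases "n \<le> m") auto
    qed
  qed
  then obtain L where L: "conv_abs absp S L" using complete by blast
  have "logp absp r = L"
    unfolding logp_def
  proof (rule the_equality)
    show "conv_abs absp (\<lambda>N. \<Sum>n<N. (-1) ^ n * (r - 1) ^ (n + 1) / of_nat (n + 1)) L"
      using L unfolding S_def u_def .
    fix L' assume "conv_abs absp (\<lambda>N. \<Sum>n<N. (-1) ^ n * (r - 1) ^ (n + 1) / of_nat (n + 1)) L'"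
    then show "L' = L" using conv_unique L unfolding S_def u_def by blast
  qed
  then show ?thesis using L unfolding S_def u_def by simp
qed

lemma pow_conv_log:
  assumes "absp (r - 1) < 1"
  shows "conv_abs absp (\<lambda>l. (r ^ (p ^ l) - 1) / of_nat (p ^ l)) (logp absp r)"
proof -
  define u where "u = r - 1"
  define S where "S N = (\<Sum>n<N. (-1) ^ n * u ^ (n + 1) / of_nat (n + 1))" for N
  define t where "t k = real k ^ 2 * absp u ^ k" for k
  have t0: "t \<longlonglongrightarrow> 0" unfolding t_def using real_k2_lim[of "absp u"] assms nonneg u_def by simp
  then have "Bseq t" by (rule convergent_imp_Bseq[OF convergentI])
  then obtain C where C: "C > 0" "\<And>k. t k \<le> C"
    by (metis BseqE real_norm_def abs_le_D1)
  have SL: "conv_abs absp S (logp absp r)" using log_conv[OF assms] unfolding S_def u_def .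
  have pl: "p ^ l \<ge> l" for l using p_gt1 by (simp add: less_imp_le_nat less_exp order_trans[OF _ power_increasing])
  have bound: "absp ((r ^ (p ^ l) - 1) / of_nat (p ^ l) - S (p ^ l)) \<le> C / real (p ^ l)" for l
  proof -
    define M where "M = p ^ l"
    have M0: "M > 0" unfolding M_def using p_gt1 by simp
    have "r ^ M = (u + 1) ^ M" unfolding u_def by simp
    also have "\<dots> = (\<Sum>k\<le>M. of_nat (M choose k) * u ^ k * 1 ^ (M - k))" by (rule binomial_ring)
    also have "\<dots> = (\<Sum>k<Suc M. of_nat (M choose k) * u ^ k)" by (simp add: lessThan_Suc_atMost)
    also have "\<dots> = 1 + (\<Sum>n<M. of_nat (M choose Suc n) * u ^ Suc n)" by (simp only: sum.lessThan_Suc_shift) simp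
    finally have "(r ^ M - 1) / of_nat M = (\<Sum>n<M. of_nat (M choose Suc n) / of_nat M * u ^ Suc n)"
      by (simp add: sum_divide_distrib)
    also have "\<dots> = (\<Sum>n<M. (-1) ^ n / of_nat (Suc n) * (\<Prod>i\<in>{1..n}. (1 - of_nat M / of_nat i)) * u ^ Suc n)"
      by (simp only: binom_prod[OF M0])
    finally have "(r ^ M - 1) / of_nat M - S M =
        (\<Sum>n<M. ((-1) ^ n * u ^ Suc n / of_nat (Suc n)) * ((\<Prod>i\<in>{1..n}. (1 - of_nat M / of_nat i)) - 1))"
      unfolding S_def by (simp add: sum_subtractf[symmetric] algebra_simps diff_divide_distrib)
    also have "absp \<dots> \<le> C / real M"
    proof (rule abs_sum_le)
      fix n assume n: "n \<in> {..<M}"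
      have B: "absp ((\<Prod>i\<in>{1..n}. (1 - of_nat M / of_nat i)) - 1) \<le> real n / real M"
      proof (rule abs_prod_le)
        fix i assume i: "i \<in> {1..n}"
        have "absp ((of_nat M :: 'a) / of_nat i) = absp (of_nat M) * absp (1 / of_nat i)"
          by (simp add: abs_divide mult abs_1)
        also have "\<dots> \<le> (1 / real M) * real i"
          using abs_inv_nat[of i] i nonneg unfolding M_def abs_ppow[of l]
          by (intro mult_left_mono) auto
        also have "\<dots> \<le> real n / real M" using i by (simp add: divide_right_mono)
        finally show "absp ((of_nat M :: 'a) / of_nat i) \<le> real n / real M" .
      qed (use n in auto)
      have "absp (((-1) ^ n * u ^ Suc n / of_nat (Suc n)) * ((\<Prod>i\<in>{1..n}. (1 - of_nat M / of_nat i)) - 1))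
          \<le> (real (Suc n) * absp u ^ Suc n) * (real n / real M)"
      proof -
        have "absp ((-1) ^ n * u ^ Suc n / of_nat (Suc n)) = absp u ^ Suc n * absp (1 / of_nat (Suc n))"
          by (simp add: abs_divide mult abs_neg1_pow abs_power abs_1 abs_minus1)
        also have "\<dots> \<le> absp u ^ Suc n * real (Suc n)"
          using abs_inv_nat[of "Suc n"] nonneg by (intro mult_left_mono) auto
        finally have "absp ((-1) ^ n * u ^ Suc n / of_nat (Suc n)) \<le> real (Suc n) * absp u ^ Suc n"
          by (simp add: mult.commute)
        then show ?thesis unfolding mult using B nonneg by (intro mult_mono) auto
      qed
      also have "\<dots> \<le> t (Suc n) / real M"
        unfolding t_def using M0 nonneg
        by (simp add: power2_eq_square divide_right_mono mult_left_mono mult_right_mono field_simps)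
      also have "\<dots> \<le> C / real M" using C M0 by (simp add: divide_right_mono)
      finally show "absp (((-1) ^ n * u ^ Suc n / of_nat (Suc n)) * ((\<Prod>i\<in>{1..n}. (1 - of_nat M / of_nat i)) - 1)) \<le> C / real M" .
    qed (use C M0 in auto)
    finally show ?thesis unfolding M_def .
  qed
  have c1: "conv_abs absp (\<lambda>l. (r ^ (p ^ l) - 1) / of_nat (p ^ l) - S (p ^ l)) 0"
  proof (rule conv_bound)
    show "eventually (\<lambda>l. absp ((r ^ (p ^ l) - 1) / of_nat (p ^ l) - S (p ^ l) - 0) \<le> C / real p ^ l) sequentially"
      using bound by simp
    show "(\<lambda>l. C / real p ^ l) \<longlonglongrightarrow> 0" using p_gt1 by (intro LIMSEQ_divide_realpow_zero) simp
  qed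
  have c2: "conv_abs absp (\<lambda>l. S (p ^ l)) (logp absp r)" by (rule conv_reindex[OF SL pl])
  show ?thesis using conv_add[OF c1 c2] by simp
qed

lemma conv_to_one:
  assumes "conv_abs absp (\<lambda>l. (x l - 1) / m l) L" "conv_abs absp m 0" "\<And>l. m l \<noteq> 0"
  shows "conv_abs absp x 1"
proof -
  have "conv_abs absp (\<lambda>l. m l * ((x l - 1) / m l)) (0 * L)" by (rule conv_mult[OF assms(2,1)])
  then have "conv_abs absp (\<lambda>l. (x l - 1) + 1) (0 + 1)" using assms(3)
    by (intro conv_add conv_const) simp
  then show ?thesis by simp
qed

lemma conv_pow_nat:
  assumes "conv_abs absp (\<lambda>l. (x l - 1) / m l) L" "conv_abs absp m 0" "\<And>l. m l \<noteq> 0"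
  shows "conv_abs absp (\<lambda>l. (x l ^ n - 1) / m l) (of_nat n * L)"
proof (induction n)
  case 0 then show ?case using conv_const[of 0] by simp
next
  case (Suc n)
  have x1: "conv_abs absp x 1" by (rule conv_to_one[OF assms])
  have "conv_abs absp (\<lambda>l. x l * ((x l ^ n - 1) / m l) + (x l - 1) / m l) (1 * (of_nat n * L) + L)"
    by (intro conv_add conv_mult x1 Suc assms(1))
  moreover have "x l * ((x l ^ n - 1) / m l) + (x l - 1) / m l = (x l ^ Suc n - 1) / m l" for l
    using assms(3)[of l] by (simp add: field_simps)
  ultimately show ?case by (simp add: algebra_simps)
qed

lemma conv_inverse_one:
  assumes "conv_abs absp x 1"
  shows "conv_abs absp (\<lambda>l. inverse (x l)) 1"
proof (rule conv_bound)
  obtain N where N: "\<forall>n\<ge>N. absp (x n - 1) < 1" using assms unfolding conv_abs_def by force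
  show "eventually (\<lambda>l. absp (inverse (x l) - 1) \<le> absp (x l - 1)) sequentially"
    unfolding eventually_sequentially
  proof (intro exI allI impI)
    fix n assume "n \<ge> N"
    then have a: "absp (x n - 1) < 1" using N by blast
    have "absp (x n) \<le> max (absp (x n - 1)) (absp 1)" using ultra[of "x n - 1" 1] by simp
    moreover have "absp 1 \<le> max (absp (1 - x n)) (absp (x n))" using ultra[of "1 - x n" "x n"] by simp
    ultimately have xn: "absp (x n) = 1" using a abs_1 abs_diff_commute[of "x n" 1] by linarith
    then have "x n \<noteq> 0" using abs_0 by auto
    then have "inverse (x n) - 1 = (1 - x n) / x n" by (simp add: field_simps)
    then show "absp (inverse (x n) - 1) \<le> absp (x n - 1)"
      using xn abs_divide abs_diff_commute by simp
  qed
  show "(\<lambda>l. absp (x l - 1)) \<longlonglongrightarrow> 0" using assms unfolding conv_iff .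
qed

lemma conv_inv:
  assumes "conv_abs absp (\<lambda>l. (x l - 1) / m l) L" "conv_abs absp m 0" "\<And>l. m l \<noteq> 0" "\<And>l. x l \<noteq> 0"
  shows "conv_abs absp (\<lambda>l. (inverse (x l) - 1) / m l) (- L)"
proof -
  have x1: "conv_abs absp x 1" by (rule conv_to_one[OF assms(1-3)])
  have "conv_abs absp (\<lambda>l. - ((x l - 1) / m l) * inverse (x l)) (- L * 1)"
    by (intro conv_mult conv_neg assms(1) conv_inverse_one x1)
  moreover have "- ((x l - 1) / m l) * inverse (x l) = (inverse (x l) - 1) / m l" for l
    using assms(3,4)[of l] by (simp add: field_simps)
  ultimately show ?thesis by simp
qed

lemma conv_powi:
  assumes "conv_abs absp (\<lambda>l. (x l - 1) / m l) L" "conv_abs absp m 0" "\<And>l. m l \<noteq> 0" "\<And>l. x l \<noteq> 0"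
  shows "conv_abs absp (\<lambda>l. (x l powi h - 1) / m l) (of_int h * L)"
proof (cases "h \<ge> 0")
  case True
  then show ?thesis using conv_pow_nat[OF assms(1-3), of "nat h"]
    by (simp add: power_int_def)
next
  case False
  have "conv_abs absp (\<lambda>l. (inverse (x l) ^ nat (- h) - 1) / m l) (of_nat (nat (- h)) * (- L))"
    by (rule conv_pow_nat[OF conv_inv[OF assms] assms(2,3)])
  moreover have "(of_nat (nat (- h)) :: 'a) = - of_int h" using False
    by (metis le_cases neg_0_le_iff_le of_int_minus of_int_of_nat_eq int_nat_eq nat_0_le)
  ultimately show ?thesis using False by (simp add: power_int_def)
qed

lemma conv_ppow: "conv_abs absp (\<lambda>l. (of_nat (p ^ l) :: 'a) ^ j) (if j = 0 then 1 else 0)"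
proof (induction j)
  case 0 then show ?case using conv_const[of 1] by simp
next
  case (Suc j)
  have m0: "conv_abs absp (\<lambda>l. (of_nat (p ^ l) :: 'a)) 0"
  proof (rule conv_bound)
    show "eventually (\<lambda>l. absp ((of_nat (p ^ l) :: 'a) - 0) \<le> 1 / real p ^ l) sequentially"
      using abs_ppow by simp
    show "(\<lambda>l. 1 / real p ^ l) \<longlonglongrightarrow> 0" using p_gt1 by (intro LIMSEQ_divide_realpow_zero) simp
  qed
  have "conv_abs absp (\<lambda>l. (of_nat (p ^ l) :: 'a) * of_nat (p ^ l) ^ j) (0 * (if j = 0 then 1 else 0))"
    by (rule conv_mult[OF m0 Suc])
  then show ?case by simp
qed

lemma conv_fps_mult:
  assumes "\<And>i. conv_abs absp (\<lambda>l. A l $ i) (B $ i)"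
  shows "conv_abs absp (\<lambda>l. (A l * E) $ n) ((B * E) $ n)"
  unfolding fps_mult_nth
  by (intro conv_sum conv_mult assms conv_const) auto

lemma conv_fps_div:
  assumes "\<And>i. conv_abs absp (\<lambda>l. A l $ i) (B $ i)"
  shows "conv_abs absp (\<lambda>l. (A l / D) $ n) ((B / D) $ n)"
  unfolding fps_divide_def fps_shift_nth
  by (rule conv_fps_mult[OF assms])

end



theorem lemma3:
  fixes p d k :: nat and h :: int and q :: "'a::field_char_0"
    and absp :: "'a \<Rightarrow> real" and \<chi> :: "nat \<Rightarrow> 'a"
  assumes "prime p"
    and "is_Cp p absp"
    and "absp (1 - q) < real p powr (- 1 / (real p - 1))"
    and "d > 0"
    and "has_conductor \<chi> d"
  shows "conv_abs absp (volk_sum p d \<chi> h q k)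
           (of_nat d powi (int k - 1) *
             (\<Sum>i<d. \<chi> i * q powi (h * int i) *
                 hq_bernpoly absp h (q ^ d) k (of_nat i / of_nat d)))"
proof -
  interpret padic absp p
    using assms(1,2) unfolding is_Cp_def by unfold_locales auto
  have per: "\<And>a. \<chi> (a + d) = \<chi> a" using assms(5) unfolding has_conductor_def dirichlet_char_def by blast
  have "real p powr (- 1 / (real p - 1)) < 1"
    using p_gt1 by (intro powr_less_one) (auto simp: field_simps)
  then have q1: "absp (1 - q) < 1" using assms(3) by linarith
  have q0: "q \<noteq> 0" using q1 abs_1 by auto
  have qle: "absp q \<le> 1"
    using ultra[of "q - 1" 1] q1 abs_1 abs_diff_commute[of q 1] by simp
  define r where "r = q ^ d"
  have r0: "r \<noteq> 0" using q0 unfolding r_def by simp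
  have r1: "absp (r - 1) < 1"
  proof -
    have "1 - r = (1 - q) * (\<Sum>i<d. q ^ i)" unfolding r_def by (rule one_diff_power_eq)
    moreover have "absp (\<Sum>i<d. q ^ i) \<le> 1"
      by (rule abs_sum_le) (use qle nonneg in \<open>auto simp: abs_power power_le_one\<close>)
    ultimately have "absp (1 - r) \<le> absp (1 - q)"
      using nonneg by (simp add: mult mult_left_le)
    then show ?thesis using q1 abs_diff_commute[of r 1] by simp
  qed
  define Q where "Q = r powi h"
  have Q0: "Q \<noteq> 0" using r0 unfolding Q_def by simp
  define lam where "lam = of_int h * logp absp r"
  define m :: "nat \<Rightarrow> 'a" where "m l = of_nat (p ^ l)" for l
  have m0: "m l \<noteq> 0" for l unfolding m_def using p_gt1 by simp
  have mc: "conv_abs absp m 0" using conv_ppow[of 1] unfolding m_def by simp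
  have c_log: "conv_abs absp (\<lambda>l. (r ^ (p ^ l) - 1) / m l) (logp absp r)"
    unfolding m_def by (rule pow_conv_log[OF r1])
  have c_pi: "conv_abs absp (\<lambda>l. ((r ^ (p ^ l)) powi h - 1) / m l) lam"
    unfolding lam_def by (rule conv_powi[OF c_log mc m0]) (use r0 in simp)
  have QM: "(r ^ (p ^ l)) powi h = Q ^ (p ^ l)" for l
    unfolding Q_def by (simp add: power_int_power power_int_power' mult.commute)
  have c0: "conv_abs absp (\<lambda>l. (Q ^ (p ^ l) - 1) / m l) lam" using c_pi unfolding QM .
  have cQ: "conv_abs absp (\<lambda>l. Q ^ (p ^ l)) 1" by (rule conv_to_one[OF c0 mc m0])
  define G where "G l = fps_const (1 / m l) * (fps_const (Q ^ (p ^ l)) * fps_exp (m l) - 1)" for l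
  define B where "B = fps_const lam + fps_X"
  define D where "D = fps_const Q * fps_exp 1 - (1 :: 'a fps)"
  define F where "F l = fps_const (1 / m l) * (\<Sum>y<p ^ l. fps_const (Q ^ y) * fps_exp (of_nat y))" for l
  have D0: "D \<noteq> 0"
  proof
    assume "D = 0"
    then have "D $ 1 = 0" by simp
    then show False using Q0 unfolding D_def by simp
  qed
  have DF: "D * F l = G l" for l
  proof -
    have "D * F l = fps_const (1 / m l) * (D * (\<Sum>y<p ^ l. fps_const (Q ^ y) * fps_exp (of_nat y)))"
      unfolding F_def by (simp only: mult.left_commute)
    also have "\<dots> = G l" unfolding D_def fps_tele G_def m_def by (rule refl)
    finally show ?thesis .
  qed
  have FG: "F l = G l / D" for l
    using nonzero_mult_div_cancel_left[OF D0, of "F l"] DF[of l] by simp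
  have cG: "conv_abs absp (\<lambda>l. G l $ i) (B $ i)" for i
  proof (cases "i = 0")
    case True
    then show ?thesis using c0 unfolding G_def B_def by simp
  next
    case False
    have "conv_abs absp (\<lambda>l. Q ^ (p ^ l) * (m l ^ (i - 1) * (1 / fact i))) (1 * ((if i - 1 = 0 then 1 else 0) * (1 / fact i)))"
      unfolding m_def by (intro conv_mult cQ conv_ppow conv_const)
    moreover have "G l $ i = Q ^ (p ^ l) * (m l ^ (i - 1) * (1 / fact i))" for l
    proof -
      have "m l ^ i = m l * m l ^ (i - 1)" using False by (metis power_eq_if)
      then show ?thesis unfolding G_def using False m0[of l] by simp
    qed
    moreover have "B $ i = (if i = 1 then 1 else 0)" unfolding B_def using False by simp
    ultimately show ?thesis using False cQ by (cases "i = 1") auto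
  qed
  have cF: "conv_abs absp (\<lambda>l. F l $ i) ((B / D) $ i)" for i
    unfolding FG by (rule conv_fps_div[OF cG])
  have cFE: "conv_abs absp (\<lambda>l. (F l * fps_exp a) $ k) ((B / D * fps_exp a) $ k)" for a
    by (rule conv_fps_mult[OF cF])
  have Fnth: "(F l * fps_exp a) $ k = (1 / m l) * (\<Sum>y<p ^ l. Q ^ y * (of_nat y + a) ^ k / fact k)" for l a
  proof -
    have "F l * fps_exp a = fps_const (1 / m l) * (\<Sum>y<p ^ l. fps_const (Q ^ y) * fps_exp (of_nat y + a))"
      unfolding F_def by (simp add: sum_distrib_right fps_exp_add_mult mult.assoc)
    then show ?thesis by (simp add: fps_sum_nth)
  qed
  have hq: "hq_bernpoly absp h (q ^ d) k a = fact k * (B / D * fps_exp a) $ k" for a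
    unfolding hq_bernpoly_def B_def D_def lam_def Q_def r_def ..
  have vs: "volk_sum p d \<chi> h q k l = of_nat d powi (int k - 1) *
      (\<Sum>i<d. \<chi> i * q powi (h * int i) * (fact k * (F l * fps_exp (of_nat i / of_nat d)) $ k))" for l
  proof -
    define a where "a i = (of_nat i / of_nat d :: 'a)" for i
    define T where "T i = (\<Sum>y<p ^ l. Q ^ y * (of_nat y + a i) ^ k)" for i
    have chi: "\<chi> (i + d * y) = \<chi> i" for i y
    proof (induction y)
      case 0 then show ?case by simp
    next
      case (Suc y)
      have "i + d * Suc y = (i + d * y) + d" by simp
      then show ?case using per[of "i + d * y"] Suc by (simp only:)
    qed
    have pw: "q powi (h * int (i + d * y)) = q powi (h * int i) * Q ^ y" for i y
    proof -
      have "Q ^ y = q powi (int d * h * int y)"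
        unfolding Q_def r_def by (simp add: power_int_power power_int_power')
      moreover have "h * int (i + d * y) = h * int i + int d * h * int y" by (simp add: algebra_simps)
      ultimately show ?thesis using q0 by (simp add: power_int_add)
    qed
    have nt: "(of_nat (i + d * y) :: 'a) ^ k = of_nat d ^ k * (of_nat y + a i) ^ k" for i y
    proof -
      have "(of_nat (i + d * y) :: 'a) = of_nat d * (of_nat y + a i)"
        unfolding a_def using assms(4) by (simp add: field_simps)
      then show ?thesis by (simp add: power_mult_distrib)
    qed
    have "(\<Sum>x<d * p ^ l. \<chi> x * q powi (h * int x) * of_nat x ^ k)
        = (\<Sum>i<d. \<Sum>y<p ^ l. \<chi> (i + d * y) * q powi (h * int (i + d * y)) * of_nat (i + d * y) ^ k)"
      by (rule sum_split_blocks)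
    also have "\<dots> = (\<Sum>i<d. \<chi> i * q powi (h * int i) * of_nat d ^ k * T i)"
      unfolding T_def chi pw nt by (simp add: sum_distrib_left algebra_simps)
    finally have S: "(\<Sum>x<d * p ^ l. \<chi> x * q powi (h * int x) * of_nat x ^ k)
        = (\<Sum>i<d. \<chi> i * q powi (h * int i) * of_nat d ^ k * T i)" .
    have fk: "fact k * (F l * fps_exp (a i)) $ k = T i / m l" for i
      unfolding Fnth T_def by (simp add: sum_divide_distrib[symmetric] field_simps)
    have dk: "(of_nat d :: 'a) powi (int k - 1) = of_nat d ^ k / of_nat d"
      using assms(4) by (simp add: power_int_diff)
    show ?thesis
      unfolding volk_sum_def S dk a_def[symmetric] fk m_def
      by (simp add: sum_distrib_left sum_divide_distrib field_simps)
  qed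
  show ?thesis
    unfolding vs hq
    by (intro conv_cmult conv_sum cFE) auto
qed


end
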